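(* Let $G$ be any group (discrete). Then $\ell^1(G)\cdot\ell^\infty(G)^*\subseteq\ell^1(G)$ if and only if $G$ is finite.
   Context: $\ell^1(G)$ is the group algebra with convolution; its second dual is identified with $\ell^\infty(G)^*$ and carries the first Arens product: for $a,b\in\ell^1(G)$, $a'\in\ell^\infty(G)$, $a'',b''\in\ell^\infty(G)^*$, $\langle a'a,b\rangle=\langle a',ab\rangle$, $\langle b''a',a\rangle=\langle b'',a'a\rangle$, $\langle a''\cdot b'',a'\rangle=\langle a'',b''a'\rangle$. The set $\ell^1(G)\cdot\ell^\infty(G)^*$ means $\{a\cdot a'': a\in\ell^1(G),\,a''\in\ell^\infty(G)^*\}$, with $\ell^1(G)$ canonically embedded in its bidual. *)

theory Defs
  imports "HOL-Analysis.Analysis"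
begin

text \<open>Discrete group G = a type of class group_add (written additively, not necessarily
commutative). Elements of l1(G), l_infinity(G) are functions
G => complex; elements of l_infinity(G)^* are functionals on (G => complex), of which only
the values on bounded functions matter.\<close>

definition l1 :: "('g \<Rightarrow> complex) \<Rightarrow> bool" where
  "l1 a \<longleftrightarrow> (\<lambda>x. norm (a x)) summable_on UNIV"

definition linf :: "('g \<Rightarrow> complex) \<Rightarrow> bool" where
  "linf a' \<longleftrightarrow> bounded (range a')"

definition sup_norm :: "('g \<Rightarrow> complex) \<Rightarrow> real" where
  "sup_norm a' = (SUP x. norm (a' x))"

definition linf_dual :: "(('g \<Rightarrow> complex) \<Rightarrow> complex) \<Rightarrow> bool" where
  "linf_dual F \<longleftrightarrow>
     (\<forall>u v. linf u \<longrightarrow> linf v \<longrightarrow> F (\<lambda>x. u x + v x) = F u + F v) \<and>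
     (\<forall>c u. linf u \<longrightarrow> F (\<lambda>x. c * u x) = c * F u) \<and>
     (\<exists>C. \<forall>u. linf u \<longrightarrow> norm (F u) \<le> C * sup_norm u)"

definition pair :: "('g \<Rightarrow> complex) \<Rightarrow> ('g \<Rightarrow> complex) \<Rightarrow> complex" where
  "pair a' a = (\<Sum>\<^sub>\<infinity>x. a' x * a x)"

definition conv :: "('g::group_add \<Rightarrow> complex) \<Rightarrow> ('g \<Rightarrow> complex) \<Rightarrow> ('g \<Rightarrow> complex)" where
  "conv a b = (\<lambda>x. \<Sum>\<^sub>\<infinity>y. a y * b (- y + x))"

definition delta :: "'g \<Rightarrow> ('g \<Rightarrow> complex)" where
  "delta y = (\<lambda>x. if x = y then 1 else 0)"

text \<open>a' . a in l_infinity(G):  <a'a, b> = <a', a*b>; its value at y is <a', a * delta y>.\<close>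
definition linf_l1_act :: "('g::group_add \<Rightarrow> complex) \<Rightarrow> ('g \<Rightarrow> complex) \<Rightarrow> ('g \<Rightarrow> complex)" where
  "linf_l1_act a' a = (\<lambda>y. pair a' (conv a (delta y)))"

text \<open>b'' . a' in l_infinity(G):  <b''a', a> = <b'', a'a>; its value at y is <b'', a' delta y>.\<close>
definition bidual_linf_act ::
  "(('g::group_add \<Rightarrow> complex) \<Rightarrow> complex) \<Rightarrow> ('g \<Rightarrow> complex) \<Rightarrow> ('g \<Rightarrow> complex)" where
  "bidual_linf_act b'' a' = (\<lambda>y. b'' (linf_l1_act a' (delta y)))"

definition arens1 ::
  "(('g::group_add \<Rightarrow> complex) \<Rightarrow> complex) \<Rightarrow> (('g \<Rightarrow> complex) \<Rightarrow> complex)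
     \<Rightarrow> (('g \<Rightarrow> complex) \<Rightarrow> complex)" where
  "arens1 a'' b'' = (\<lambda>a'. a'' (bidual_linf_act b'' a'))"

definition embed :: "('g \<Rightarrow> complex) \<Rightarrow> (('g \<Rightarrow> complex) \<Rightarrow> complex)" where
  "embed a = (\<lambda>a'. pair a' a)"

end

theory Submission
  imports Defs
begin

lemma infsum_delta: "(\<Sum>\<^sub>\<infinity>x. f x * delta y x) = (f y :: complex)"
proof -
  have "(\<Sum>\<^sub>\<infinity>x. f x * delta y x) = (\<Sum>\<^sub>\<infinity>x\<in>{y}. f x * delta y x)"
    by (rule infsum_cong_neutral) (auto simp: delta_def)
  also have "\<dots> = f y" by (simp add: delta_def)
  finally show ?thesis .
qed

lemma pair_delta: "pair a' (delta y) = a' y"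
  by (simp add: pair_def infsum_delta)

lemma pair_delta2: "pair (delta y) a = a y"
  unfolding pair_def using infsum_delta[of a y] by (simp add: mult.commute)

lemma conv_delta0: "conv (delta 0) (delta y) = delta (y::'g::group_add)"
proof
  fix x
  have "conv (delta 0) (delta y) x = (\<Sum>\<^sub>\<infinity>z. delta y (-z+x) * delta 0 z)"
    by (simp add: conv_def mult.commute)
  also have "\<dots> = delta y x" by (subst infsum_delta) simp
  finally show "conv (delta 0) (delta y) x = delta y x" .
qed

lemma reduce: "arens1 (embed (delta (0::'g::group_add))) a'' = a''"
proof -
  have e: "\<And>a'. linf_l1_act a' (delta 0) = a'"
    by (rule ext) (simp add: linf_l1_act_def conv_delta0 pair_delta)
  show ?thesis
    by (rule ext) (simp add: arens1_def embed_def pair_delta bidual_linf_act_def e)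
qed

lemma l1_delta: "l1 (delta y)"
  unfolding l1_def
  by (rule summable_on_cong_neutral[where S="{y}", THEN iffD1]) (auto simp: delta_def)

lemma ex_ultra:
  fixes F :: "'a filter"
  assumes F: "F \<noteq> bot"
  shows "\<exists>U\<le>F. U \<noteq> bot \<and> (\<forall>P. eventually P U \<or> eventually (\<lambda>x. \<not> P x) U)"
proof -
  let ?R = "{(b, a). a \<noteq> bot \<and> a \<le> b \<and> b \<le> F}"
  have bot_notin_R: "c \<in> Chains ?R \<Longrightarrow> bot \<notin> c" for c
    by (auto simp: Chains_def)
  have [simp]: "Field ?R = {G. G \<noteq> bot \<and> G \<le> F}"
    by (auto simp: Field_def bot_unique)
  have "\<exists>m\<in>Field ?R. \<forall>a\<in>Field ?R. (m, a) \<in> ?R \<longrightarrow> a = m"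
  proof (rule Zorns_po_lemma)
    show "Partial_order ?R"
      by (auto simp: partial_order_on_def preorder_on_def
          antisym_def refl_on_def trans_def Field_def bot_unique)
    show "\<exists>u\<in>Field ?R. \<forall>a\<in>C. (a, u) \<in> ?R" if C: "C \<in> Chains ?R" for C
    proof (simp, intro exI conjI ballI)
      have Inf_C: "Inf C \<noteq> bot" "Inf C \<le> F" if "C \<noteq> {}"
      proof -
        from C that have "Inf C = bot \<longleftrightarrow> (\<exists>x\<in>C. x = bot)"
          unfolding trivial_limit_def by (intro eventually_Inf_base) (auto simp: Chains_def)
        with C show "Inf C \<noteq> bot"
          by (simp add: bot_notin_R)
        from that obtain x where "x \<in> C" by auto
        with C show "Inf C \<le> F"
          by (auto intro!: Inf_lower2[of x] simp: Chains_def)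
      qed
      then have [simp]: "inf F (Inf C) = (if C = {} then F else Inf C)"
        using C by (auto simp add: inf_absorb2)
      from C show "inf F (Inf C) \<noteq> bot"
        by (simp add: F Inf_C)
      from C show "inf F (Inf C) \<le> F"
        by (simp add: Chains_def Inf_C F)
      with C show "inf F (Inf C) \<le> x" "x \<le> F" if "x \<in> C" for x
        using that  by (auto intro: Inf_lower simp: Chains_def)
    qed
  qed
  then obtain U where U: "U \<noteq> bot" "U \<le> F" and max: "\<And>G. G \<noteq> bot \<Longrightarrow> G \<le> U \<Longrightarrow> U = G"
    by (auto intro: order_trans)
  have "eventually P U \<or> eventually (\<lambda>x. \<not> P x) U" for P
  proof (rule disjCI)
    assume "\<not> (\<forall>\<^sub>Fx in U. \<not> P x)"
    then have "inf U (principal {x. P x}) \<noteq> bot"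
      by (simp add: trivial_limit_def eventually_inf_principal not_eventually)
    then have E: "U = inf U (principal {x. P x})"
      by (rule max) simp
    show "eventually P U"
      by (subst E) (simp add: eventually_inf_principal)
  qed
  with U show ?thesis by blast
qed


lemma ultra_lim:
  fixes U :: "'a filter" and u :: "'a \<Rightarrow> complex"
  assumes U: "U \<noteq> bot" and ul: "\<forall>P. eventually P U \<or> eventually (\<lambda>x. \<not> P x) U"
    and b: "bounded (range u)"
  shows "\<exists>l. (u \<longlongrightarrow> l) U"
proof -
  let ?K = "closure (range u)"
  have K: "compact ?K" using b by (simp add: compact_closure)
  have ne: "filtermap u U \<noteq> bot" using U by (simp add: filtermap_bot_iff)
  have ev: "eventually (\<lambda>x. x \<in> ?K) (filtermap u U)"
    by (simp add: eventually_filtermap closure_subset[THEN subsetD])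
  obtain l where l: "inf (nhds l) (filtermap u U) \<noteq> bot"
    using K ne ev unfolding compact_filter by blast
  have "(u \<longlongrightarrow> l) U"
    unfolding tendsto_def
  proof (intro allI impI)
    fix S assume S: "open S" "l \<in> S"
    show "eventually (\<lambda>x. u x \<in> S) U"
    proof (rule ccontr)
      assume "\<not> eventually (\<lambda>x. u x \<in> S) U"
      then have "eventually (\<lambda>x. \<not> u x \<in> S) U" using ul by blast
      then have e2: "eventually (\<lambda>y. y \<notin> S) (filtermap u U)" by (simp add: eventually_filtermap)
      have e1: "eventually (\<lambda>y. y \<in> S) (nhds l)" using S by (rule eventually_nhds_in_open)
      have "eventually (\<lambda>_. False) (inf (nhds l) (filtermap u U))"
        unfolding eventually_inf using e1 e2 by blast
      then show False using l by (simp add: trivial_limit_def)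
    qed
  qed
  then show ?thesis by blast
qed

lemma infinite_case:
  assumes inf: "infinite (UNIV :: 'g::group_add set)"
  shows "\<exists>(a :: 'g \<Rightarrow> complex) a''. l1 a \<and> linf_dual a'' \<and>
            \<not> (\<exists>c. l1 c \<and> (\<forall>a'. linf a' \<longrightarrow> arens1 (embed a) a'' a' = embed c a'))"
proof -
  have "cofinite \<noteq> (bot :: 'g filter)" using inf by simp
  from ex_ultra[OF this] obtain U :: "'g filter" where
    U: "U \<le> cofinite" "U \<noteq> bot" and ul: "\<forall>P. eventually P U \<or> eventually (\<lambda>x. \<not> P x) U"
    by blast
  define Phi where "Phi = (\<lambda>u::'g \<Rightarrow> complex. Lim U u)"
  have lim: "(u \<longlongrightarrow> Phi u) U" if lu0: "linf u" for u
  proof -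
    obtain l where "(u \<longlongrightarrow> l) U" using ultra_lim[OF U(2) ul, of u] lu0 unfolding linf_def by blast
    then show ?thesis using U(2) by (simp add: Phi_def tendsto_Lim)
  qed
  have Phi_eq: "Phi u = l" if "(u \<longlongrightarrow> l) U" for u l
    using that U(2) by (simp add: Phi_def tendsto_Lim)
  have dual: "linf_dual Phi"
    unfolding linf_dual_def
  proof (intro conjI allI impI exI)
    fix u v :: "'g \<Rightarrow> complex" assume "linf u" "linf v"
    then show "Phi (\<lambda>x. u x + v x) = Phi u + Phi v"
      by (intro Phi_eq tendsto_add lim)
  next
    fix c and u :: "'g \<Rightarrow> complex" assume "linf u"
    then show "Phi (\<lambda>x. c * u x) = c * Phi u"
      by (intro Phi_eq tendsto_mult tendsto_const lim)
  next
    fix u :: "'g \<Rightarrow> complex" assume lu: "linf u"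
    have bdd: "bdd_above (range (\<lambda>x. norm (u x)))"
      using lu unfolding linf_def bounded_iff bdd_above_def by auto
    have "\<forall>x. norm (u x) \<le> sup_norm u"
      unfolding sup_norm_def using bdd by (auto intro: cSUP_upper)
    then have "norm (Phi u) \<le> sup_norm u"
      using U(2) by (intro tendsto_upperbound[OF tendsto_norm[OF lim[OF lu]]]) auto
    then show "norm (Phi u) \<le> 1 * sup_norm u" by simp
  qed
  have nr: "\<not> (\<exists>c. l1 c \<and> (\<forall>a'. linf a' \<longrightarrow> arens1 (embed (delta 0)) Phi a' = embed c a'))"
  proof
    assume ex: "\<exists>c. l1 c \<and> (\<forall>a'. linf a' \<longrightarrow> arens1 (embed (delta 0)) Phi a' = embed c a')"
    then obtain c where c: "\<And>a'. linf a' \<Longrightarrow> Phi a' = pair a' c"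
    proof -
      from ex obtain c where "l1 c" "\<forall>a'. linf a' \<longrightarrow> arens1 (embed (delta 0)) Phi a' = embed c a'" by blast
      then have "\<And>a'. linf a' \<Longrightarrow> Phi a' = pair a' c"
        using reduce[of Phi] by (simp only: embed_def)
      then show ?thesis using that by blast
    qed
    have c0: "c y = 0" for y
    proof -
      have ld: "linf (delta y)"
      proof -
        have "range (delta y) \<subseteq> {0,1}" by (auto simp: delta_def)
        then show ?thesis unfolding linf_def
          by (rule bounded_subset[OF finite_imp_bounded, rotated]) simp
      qed
      have "eventually (\<lambda>x. x \<noteq> y) U"
        using U(1) by (rule filter_leD) (simp add: eventually_cofinite)
      then have "eventually (\<lambda>x. delta y x = 0) U"
        by eventually_elim (simp add: delta_def)
      then have "(delta y \<longlongrightarrow> 0) U" by (rule tendsto_eventually)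
      then have "Phi (delta y) = 0" by (rule Phi_eq)
      then show ?thesis using c[OF ld] by (simp add: pair_delta2)
    qed
    have l1: "linf (\<lambda>_::'g. 1::complex)" unfolding linf_def by simp
    have "Phi (\<lambda>_. 1) = 1" by (rule Phi_eq) simp
    moreover have "pair (\<lambda>_. 1) c = 0" by (simp add: pair_def c0)
    ultimately show False using c[OF l1] by simp
  qed
  show ?thesis using l1_delta[of 0] dual nr by blast
qed


lemma finite_case:
  assumes fin: "finite (UNIV :: 'g::group_add set)" and dual: "linf_dual a''"
  shows "\<exists>c. l1 c \<and> (\<forall>a'. linf a' \<longrightarrow> arens1 (embed (a::'g \<Rightarrow> complex)) a'' a' = embed c a')"
proof -
  have linf_all: "linf (u::'g \<Rightarrow> complex)" for u
    unfolding linf_def using fin by (simp add: finite_imp_bounded)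
  have add: "a'' (\<lambda>x. u x + v x) = a'' u + a'' v" for u v :: "'g \<Rightarrow> complex"
    using dual linf_all unfolding linf_dual_def by blast
  have hom: "a'' (\<lambda>x. k * u x) = k * a'' u" for k and u :: "'g \<Rightarrow> complex"
    using dual linf_all unfolding linf_dual_def by blast
  have zero: "a'' (\<lambda>x. 0) = 0"
    using hom[of 0 "\<lambda>x. 0"] by simp
  have lsum: "a'' (\<lambda>z. \<Sum>x\<in>S. h x z) = (\<Sum>x\<in>S. a'' (h x))" if "finite S" for S and h :: "'b \<Rightarrow> 'g \<Rightarrow> complex"
    using that
  proof (induction S rule: finite_induct)
    case empty then show ?case using zero by simp
  next
    case (insert x F)
    then show ?case using add[of "h x" "\<lambda>z. \<Sum>x\<in>F. h x z"] by simp
  qed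
  define G where "G x y = linf_l1_act (delta x) (delta y)" for x y :: 'g
  have act: "linf_l1_act a' (delta y) = (\<lambda>z. \<Sum>x\<in>UNIV. a' x * G x y z)" for a' y
    unfolding G_def linf_l1_act_def pair_delta2 by (simp add: pair_def fin)
  define c where "c x = (\<Sum>y\<in>UNIV. a'' (G x y) * a y)" for x
  have "arens1 (embed a) a'' a' = embed c a'" for a'
  proof -
    have "arens1 (embed a) a'' a' = (\<Sum>y\<in>UNIV. a'' (linf_l1_act a' (delta y)) * a y)"
      by (simp add: arens1_def embed_def pair_def bidual_linf_act_def fin)
    also have "\<dots> = (\<Sum>y\<in>UNIV. (\<Sum>x\<in>UNIV. a' x * a'' (G x y)) * a y)"
    proof (rule sum.cong[OF refl])
      fix y
      have "a'' (linf_l1_act a' (delta y)) = (\<Sum>x\<in>UNIV. a'' (\<lambda>z. a' x * G x y z))"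
        unfolding act by (rule lsum[OF fin])
      also have "\<dots> = (\<Sum>x\<in>UNIV. a' x * a'' (G x y))"
        using hom by (metis (no_types))
      finally show "a'' (linf_l1_act a' (delta y)) * a y = (\<Sum>x\<in>UNIV. a' x * a'' (G x y)) * a y"
        by simp
    qed
    also have "\<dots> = (\<Sum>y\<in>UNIV. \<Sum>x\<in>UNIV. a' x * (a'' (G x y) * a y))"
      by (simp add: sum_distrib_right mult.assoc)
    also have "\<dots> = (\<Sum>x\<in>UNIV. \<Sum>y\<in>UNIV. a' x * (a'' (G x y) * a y))"
      by (rule sum.swap)
    also have "\<dots> = (\<Sum>x\<in>UNIV. a' x * c x)"
      unfolding c_def by (simp add: sum_distrib_left)
    also have "\<dots> = embed c a'" by (simp add: embed_def pair_def fin)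
    finally show ?thesis .
  qed
  moreover have "l1 c" unfolding l1_def using fin by simp
  ultimately show ?thesis by blast
qed

theorem corollary2p4:
  shows "(\<forall>(a :: 'g::group_add \<Rightarrow> complex) a''. l1 a \<longrightarrow> linf_dual a'' \<longrightarrow>
            (\<exists>c. l1 c \<and> (\<forall>a'. linf a' \<longrightarrow> arens1 (embed a) a'' a' = embed c a')))
         \<longleftrightarrow> finite (UNIV :: 'g set)"
  using finite_case infinite_case by blast

end
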